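(* There exist instances and a partition $\Pi$ of the players that maximizes the number of winning pools and, among all such partitions, is lexicographically optimal with respect to its sorted pool stakes (the smallest pool stake is maximized, then the second smallest, and so on), such that $\Pi$ is a Nash equilibrium under the proportional scheme but the proportional scheme is not Sybil-proof with respect to $\Pi$.
   Context: Oceanic model (including the purely atomic case with no non-atomic players): finitely many atomic players, player $i$ with stake $a_i>0$, and possibly a continuum of non-atomic players (a measurable set contributes stake equal to its measure); threshold $h>0$ with $a_i<h$. Pools partition all players; a pool $S$ has stake $m(S)$ and reward $\rho(S)=1$ if $m(S)\ge h$ (winning), else $0$. Proportional scheme: an atomic player with stake $a_i$ in pool $C$ receives $\frac{a_i}{m(C)}\rho(C)$; non-atomic players receive $\rho(C)/m(C)$ per unit of stake. A partition into winning pools is a Nash equilibrium if no atomic player can strictly increase her payment by moving to another pool or opening a new pool alone, and no non-atomic player can strictly increase her per-unit reward by moving to another pool. Sybil strategy: given $\Pi$, an atomic player $i$ splits her stake into nonnegative amounts $s_1,\dots,s_t$ summing to $a_i$ and joins $t$ distinct pools of $\Pi$ (her original pool being taken without her), contributing $s_j$ to the $j$-th as a separate atomic identity; others stay put; her payoff is the sum of the payments to her identities. The scheme is Sybil-proof with respect to $\Pi$ if no atomic player becomes strictly better off by a Sybil strategy. *)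

theory Defs
  imports Complex_Main
begin

text \<open>
An instance: atomic players 0..n-1 with stakes a i, a total mass M >= 0 of
non-atomic players (only measures matter), threshold h.
A partition: k pools labelled 0..k-1, an assignment p of atomic players to
pools, and the measure w j of non-atomic players in pool j.
\<close>

definition is_instance :: "nat \<Rightarrow> (nat \<Rightarrow> real) \<Rightarrow> real \<Rightarrow> real \<Rightarrow> bool" where
  "is_instance n a M h \<longleftrightarrow> h > 0 \<and> M \<ge> 0 \<and> (\<forall>i<n. 0 < a i \<and> a i < h)"

definition valid_partition ::
  "nat \<Rightarrow> real \<Rightarrow> nat \<Rightarrow> (nat \<Rightarrow> nat) \<Rightarrow> (nat \<Rightarrow> real) \<Rightarrow> bool" where
  "valid_partition n M k p w \<longleftrightarrow>
     (\<forall>i<n. p i < k) \<and> (\<forall>j<k. w j \<ge> 0) \<and> (\<Sum>j<k. w j) = M \<and>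
     (\<forall>j<k. (\<exists>i<n. p i = j) \<or> w j > 0)"

definition stake ::
  "nat \<Rightarrow> (nat \<Rightarrow> real) \<Rightarrow> (nat \<Rightarrow> nat) \<Rightarrow> (nat \<Rightarrow> real) \<Rightarrow> nat \<Rightarrow> real" where
  "stake n a p w j = (\<Sum>i\<in>{i. i < n \<and> p i = j}. a i) + w j"

definition num_winning ::
  "nat \<Rightarrow> (nat \<Rightarrow> real) \<Rightarrow> real \<Rightarrow> nat \<Rightarrow> (nat \<Rightarrow> nat) \<Rightarrow> (nat \<Rightarrow> real) \<Rightarrow> nat" where
  "num_winning n a h k p w = card {j. j < k \<and> stake n a p w j \<ge> h}"

definition sorted_stakes ::
  "nat \<Rightarrow> (nat \<Rightarrow> real) \<Rightarrow> nat \<Rightarrow> (nat \<Rightarrow> nat) \<Rightarrow> (nat \<Rightarrow> real) \<Rightarrow> real list" where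
  "sorted_stakes n a k p w = sort (map (stake n a p w) [0..<k])"

definition max_winning ::
  "nat \<Rightarrow> (nat \<Rightarrow> real) \<Rightarrow> real \<Rightarrow> real \<Rightarrow> nat \<Rightarrow> (nat \<Rightarrow> nat) \<Rightarrow> (nat \<Rightarrow> real) \<Rightarrow> bool" where
  "max_winning n a M h k p w \<longleftrightarrow> valid_partition n M k p w \<and>
     (\<forall>k' p' w'. valid_partition n M k' p' w' \<longrightarrow>
        num_winning n a h k' p' w' \<le> num_winning n a h k p w)"

definition lex_optimal ::
  "nat \<Rightarrow> (nat \<Rightarrow> real) \<Rightarrow> real \<Rightarrow> real \<Rightarrow> nat \<Rightarrow> (nat \<Rightarrow> nat) \<Rightarrow> (nat \<Rightarrow> real) \<Rightarrow> bool" where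
  "lex_optimal n a M h k p w \<longleftrightarrow> max_winning n a M h k p w \<and>
     (\<forall>k' p' w'. max_winning n a M h k' p' w' \<longrightarrow>
        (sorted_stakes n a k p w, sorted_stakes n a k' p' w') \<notin> lexord {(x, y). x < y})"

definition nash_equilibrium ::
  "nat \<Rightarrow> (nat \<Rightarrow> real) \<Rightarrow> real \<Rightarrow> nat \<Rightarrow> (nat \<Rightarrow> nat) \<Rightarrow> (nat \<Rightarrow> real) \<Rightarrow> bool" where
  "nash_equilibrium n a h k p w \<longleftrightarrow>
     (\<forall>j<k. stake n a p w j \<ge> h) \<and>
     \<comment> \<open>atomic player moving to another existing pool\<close>
     (\<forall>i<n. \<forall>j<k. j \<noteq> p i \<longrightarrow>
        (if stake n a p w j + a i \<ge> h then a i / (stake n a p w j + a i) else 0)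
          \<le> a i / stake n a p w (p i)) \<and>
     \<comment> \<open>atomic player opening a new pool alone\<close>
     (\<forall>i<n. (if a i \<ge> h then 1 else 0) \<le> a i / stake n a p w (p i)) \<and>
     \<comment> \<open>non-atomic players (per unit of stake)\<close>
     (\<forall>j<k. w j > 0 \<longrightarrow> (\<forall>j'<k. 1 / stake n a p w j' \<le> 1 / stake n a p w j))"

definition stake_without ::
  "nat \<Rightarrow> (nat \<Rightarrow> real) \<Rightarrow> (nat \<Rightarrow> nat) \<Rightarrow> (nat \<Rightarrow> real) \<Rightarrow> nat \<Rightarrow> nat \<Rightarrow> real" where
  "stake_without n a p w i j = (if j = p i then stake n a p w j - a i else stake n a p w j)"

text \<open>Payoff of a Sybil strategy of player i: amount s j put into pool j of the
partition (j < k); pools with s j = 0 are not joined (they contribute 0).\<close>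
definition sybil_payoff ::
  "nat \<Rightarrow> (nat \<Rightarrow> real) \<Rightarrow> real \<Rightarrow> nat \<Rightarrow> (nat \<Rightarrow> nat) \<Rightarrow> (nat \<Rightarrow> real) \<Rightarrow> nat \<Rightarrow> (nat \<Rightarrow> real) \<Rightarrow> real" where
  "sybil_payoff n a h k p w i s =
     (\<Sum>j<k. if stake_without n a p w i j + s j \<ge> h
             then s j / (stake_without n a p w i j + s j) else 0)"

definition sybil_proof ::
  "nat \<Rightarrow> (nat \<Rightarrow> real) \<Rightarrow> real \<Rightarrow> nat \<Rightarrow> (nat \<Rightarrow> nat) \<Rightarrow> (nat \<Rightarrow> real) \<Rightarrow> bool" where
  "sybil_proof n a h k p w \<longleftrightarrow>
     (\<forall>i<n. \<forall>s. (\<forall>j<k. s j \<ge> 0) \<and> (\<Sum>j<k. s j) = a i \<longrightarrow>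
        sybil_payoff n a h k p w i s \<le>
          (if stake n a p w (p i) \<ge> h then a i / stake n a p w (p i) else 0))"

end

theory Submission
  imports Defs "HOL-Library.Multiset"
begin

lemma stake_sum:
  assumes "valid_partition n M k p w"
  shows "(\<Sum>j<k. stake n a p w j) = (\<Sum>i<n. a i) + M"
proof -
  have "(\<Sum>j<k. (\<Sum>i\<in>{i. i < n \<and> p i = j}. a i)) = (\<Sum>i<n. a i)"
  proof -
    have "(\<Sum>j\<in>{..<k}. (\<Sum>i\<in>{x\<in>{..<n}. p x = j}. a i)) = (\<Sum>i\<in>{..<n}. a i)"
      by (rule sum.group) (use assms in \<open>auto simp: valid_partition_def\<close>)
    moreover have "\<And>j. {x\<in>{..<n}. p x = j} = {i. i < n \<and> p i = j}" by auto
    ultimately show ?thesis by simp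
  qed
  then show ?thesis using assms by (simp add: stake_def sum.distrib valid_partition_def)
qed

lemma stake_pos:
  assumes "valid_partition n M k p w" "\<forall>i<n. a i > 0" "j < k"
  shows "stake n a p w j > 0"
proof -
  have w: "w j \<ge> 0" using assms by (auto simp: valid_partition_def)
  have s: "(\<Sum>i\<in>{i. i < n \<and> p i = j}. a i) \<ge> 0"
    using assms(2) by (intro sum_nonneg) auto
  consider "\<exists>i<n. p i = j" | "w j > 0" using assms(1,3) unfolding valid_partition_def by blast
  then show ?thesis
  proof cases
    case 1
    then obtain i where i: "i < n" "p i = j" by blast
    have "a i \<le> (\<Sum>i\<in>{i. i < n \<and> p i = j}. a i)"
      by (rule member_le_sum) (use i assms(2) in auto)
    moreover have "a i > 0" using i assms(2) by blast
    ultimately show ?thesis using w unfolding stake_def by linarith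
  next
    case 2 then show ?thesis using s unfolding stake_def by linarith
  qed
qed

definition pp :: "nat \<Rightarrow> nat" where "pp i = (if i < 2 then 0 else 1)"

lemma set0: "{i. i < (4::nat) \<and> pp i = 0} = {0,1}" by (auto simp: pp_def)
lemma set1: "{i. i < (4::nat) \<and> pp i = 1} = {2,3}" by (auto simp: pp_def)

lemma st0: "stake 4 (\<lambda>_. 1) pp (\<lambda>_. 0) 0 = 2"
  unfolding stake_def set0 by simp
lemma st1: "stake 4 (\<lambda>_. 1) pp (\<lambda>_. 0) 1 = 2"
  unfolding stake_def set1 by simp

lemma st1': "stake 4 (\<lambda>_. 1) pp (\<lambda>_. 0) (Suc 0) = 2" using st1 by simp

lemma stj: "j < 2 \<Longrightarrow> stake 4 (\<lambda>_. 1) pp (\<lambda>_. 0) j = 2"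
  using st0 st1 by (cases j) (auto simp: less_Suc_eq)

lemma valid: "valid_partition 4 0 2 pp (\<lambda>_. 0)"
proof -
  have a: "\<forall>i<4. pp i < 2" by (simp add: pp_def)
  have b: "\<forall>j<2. \<exists>i<4. pp i = j"
  proof (intro allI impI)
    fix j :: nat assume "j < 2"
    then have "j = 0 \<or> j = 1" by auto
    moreover have "pp 0 = 0" "pp 2 = 1" by (simp_all add: pp_def)
    ultimately show "\<exists>i<4. pp i = j"
    proof (elim disjE)
      assume "j = 0" then show ?thesis using \<open>pp 0 = 0\<close> by (intro exI[of _ 0]) simp
    next
      assume "j = 1" then show ?thesis using \<open>pp 2 = 1\<close> by (intro exI[of _ 2]) simp
    qed
  qed
  show ?thesis unfolding valid_partition_def using a b by simp
qed

lemma nw: "num_winning 4 (\<lambda>_. 1) (3/2) 2 pp (\<lambda>_. 0) = 2"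
proof -
  have "{j. j < 2 \<and> stake 4 (\<lambda>_. 1) pp (\<lambda>_. 0) j \<ge> 3/2} = {..<2}"
    using stj by auto
  then show ?thesis unfolding num_winning_def by simp
qed

lemma winning_le:
  assumes v: "valid_partition 4 0 k' p' w'"
  shows "num_winning 4 (\<lambda>_. 1) (3/2) k' p' w' \<le> 2"
proof -
  let ?s = "stake 4 (\<lambda>_. 1::real) p' w'"
  let ?W = "{j. j < k' \<and> ?s j \<ge> 3/2}"
  have tot: "(\<Sum>j<k'. ?s j) = 4" using stake_sum[OF v, of "\<lambda>_. 1"] by simp
  have pos: "\<And>j. j < k' \<Longrightarrow> ?s j > 0" using stake_pos[OF v] by simp
  have sub: "?W \<subseteq> {..<k'}" by auto
  have "real (card ?W) * (3/2) = (\<Sum>j\<in>?W. 3/2)" by simp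
  also have "\<dots> \<le> (\<Sum>j\<in>?W. ?s j)" by (rule sum_mono) auto
  also have "\<dots> \<le> (\<Sum>j<k'. ?s j)"
    by (rule sum_mono2) (use sub pos in \<open>auto intro: less_imp_le\<close>)
  finally have "real (card ?W) * (3/2) \<le> 4" using tot by simp
  then have "card ?W \<le> 2" by linarith
  then show ?thesis unfolding num_winning_def .
qed

lemma maxw: "max_winning 4 (\<lambda>_. 1) 0 (3/2) 2 pp (\<lambda>_. 0)"
  unfolding max_winning_def using valid winning_le nw by simp

lemma lex_aux:
  fixes ys :: "real list"
  assumes "sorted ys" "sum_list ys = 4" "\<forall>y\<in>set ys. y > 0" "length ys \<ge> 2"
  shows "([2,2], ys) \<notin> lexord {(x, y). x < y}"
proof
  assume L: "([2,2], ys) \<in> lexord {(x, y). x < y}"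
  obtain y0 y1 rest where ys: "ys = y0 # y1 # rest"
    using assms(4) by (cases ys; cases "tl ys") auto
  have le: "y0 \<le> y1" using assms(1) ys by simp
  have rs: "sum_list rest \<ge> 0" using assms(3) ys by (intro sum_list_nonneg) auto
  have sum: "y0 + y1 + sum_list rest = 4" using assms(2) ys by simp
  from L ys have "2 < y0 \<or> (y0 = 2 \<and> (2 < y1 \<or> (y1 = 2 \<and> rest \<noteq> [])))"
    by (simp add: lexord_cons_cons) blast
  then show False
  proof (elim disjE conjE)
    assume "rest \<noteq> []" "y0 = 2" "y1 = 2"
    then obtain r rs' where "rest = r # rs'" by (cases rest) auto
    moreover have "sum_list rs' \<ge> 0" using assms(3) ys calculation by (intro sum_list_nonneg) auto
    moreover have "r > 0" using assms(3) ys calculation by auto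
    ultimately show False using sum \<open>y0 = 2\<close> \<open>y1 = 2\<close> by simp
  qed (use le rs sum in linarith)+
qed

lemma lexopt: "lex_optimal 4 (\<lambda>_. 1) 0 (3/2) 2 pp (\<lambda>_. 0)"
  unfolding lex_optimal_def
proof (intro conjI allI impI maxw)
  fix k' p' w'
  assume mw: "max_winning 4 (\<lambda>_. 1) 0 (3/2) k' p' w'"
  then have v: "valid_partition 4 0 k' p' w'" by (simp add: max_winning_def)
  have "num_winning 4 (\<lambda>_. 1) (3/2) 2 pp (\<lambda>_. 0) \<le> num_winning 4 (\<lambda>_. 1) (3/2) k' p' w'"
    using mw valid unfolding max_winning_def by blast
  then have "2 \<le> num_winning 4 (\<lambda>_. 1) (3/2) k' p' w'" using nw by simp
  moreover have "num_winning 4 (\<lambda>_. 1) (3/2) k' p' w' \<le> k'"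
    unfolding num_winning_def by (rule order_trans[OF card_mono[of "{..<k'}"]]) auto
  ultimately have k2: "k' \<ge> 2" by simp
  have ours: "sorted_stakes 4 (\<lambda>_. 1) 2 pp (\<lambda>_. 0) = [2,2]"
    unfolding sorted_stakes_def using st0 st1 by (simp add: upt_rec)
  let ?ys = "sorted_stakes 4 (\<lambda>_. 1) k' p' w'"
  have "sum_list ?ys = sum_list (map (stake 4 (\<lambda>_. 1) p' w') [0..<k'])"
    unfolding sorted_stakes_def by (metis mset_sort sum_mset_sum_list)
  also have "\<dots> = (\<Sum>j<k'. stake 4 (\<lambda>_. 1) p' w' j)"
    by (simp add: sum_list_distinct_conv_sum_set atLeast0LessThan)
  also have "\<dots> = 4" using stake_sum[OF v, of "\<lambda>_. 1"] by simp
  finally have s4: "sum_list ?ys = 4" .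
  have pos: "\<forall>y\<in>set ?ys. y > 0" unfolding sorted_stakes_def using stake_pos[OF v] by auto
  have len: "length ?ys \<ge> 2" unfolding sorted_stakes_def using k2 by simp
  show "(sorted_stakes 4 (\<lambda>_. 1) 2 pp (\<lambda>_. 0), ?ys) \<notin> lexord {(x, y). x < y}"
    unfolding ours by (rule lex_aux[OF _ s4 pos len]) (simp add: sorted_stakes_def)
qed

lemma nash: "nash_equilibrium 4 (\<lambda>_. 1) (3/2) 2 pp (\<lambda>_. 0)"
proof -
  have pl: "\<And>i. pp i < 2" by (simp add: pp_def)
  have A: "\<forall>j<2. stake 4 (\<lambda>_. 1) pp (\<lambda>_. 0) j \<ge> 3/2" using stj by simp
  have B: "\<forall>i<4. \<forall>j<2. j \<noteq> pp i \<longrightarrow>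
        (if stake 4 (\<lambda>_. 1) pp (\<lambda>_. 0) j + 1 \<ge> 3/2 then 1 / (stake 4 (\<lambda>_. 1) pp (\<lambda>_. 0) j + 1) else 0)
          \<le> 1 / stake 4 (\<lambda>_. 1) pp (\<lambda>_. 0) (pp i)"
    using stj pl by simp
  have C: "\<forall>i<4. (if (1::real) \<ge> 3/2 then 1 else 0) \<le> 1 / stake 4 (\<lambda>_. 1) pp (\<lambda>_. 0) (pp i)"
    using stj pl by simp
  show ?thesis unfolding nash_equilibrium_def using A B C by simp
qed

lemma notsyb: "\<not> sybil_proof 4 (\<lambda>_. 1) (3/2) 2 pp (\<lambda>_. 0)"
proof
  assume H: "sybil_proof 4 (\<lambda>_. 1) (3/2) 2 pp (\<lambda>_. 0)"
  define s :: "nat \<Rightarrow> real" where "s = (\<lambda>j. 1/2)"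
  have p0: "pp 0 = 0" by (simp add: pp_def)
  have P: "sybil_payoff 4 (\<lambda>_. 1) (3/2) 2 pp (\<lambda>_. 0) 0 s = 8/15"
    unfolding sybil_payoff_def stake_without_def s_def
    by (simp add: numeral_2_eq_2 p0 st0 st1')
  have S1: "\<forall>j<2. s j \<ge> 0" by (simp add: s_def)
  have S2: "(\<Sum>j<2. s j) = (\<lambda>_. 1::real) 0" by (simp add: s_def numeral_2_eq_2)
  have "sybil_payoff 4 (\<lambda>_. 1) (3/2) 2 pp (\<lambda>_. 0) 0 s \<le>
          (if stake 4 (\<lambda>_. 1) pp (\<lambda>_. 0) (pp 0) \<ge> 3/2 then (\<lambda>_. 1::real) 0 / stake 4 (\<lambda>_. 1) pp (\<lambda>_. 0) (pp 0) else 0)"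
    using H[unfolded sybil_proof_def, rule_format, of 0 s] S1 S2 by simp
  then show False unfolding P p0 st0 by simp
qed

theorem theorem5p2:
  shows "\<exists>(n::nat) (a::nat \<Rightarrow> real) (M::real) (h::real) (k::nat) (p::nat \<Rightarrow> nat) (w::nat \<Rightarrow> real).
           is_instance n a M h \<and> valid_partition n M k p w \<and>
           max_winning n a M h k p w \<and> lex_optimal n a M h k p w \<and>
           nash_equilibrium n a h k p w \<and> \<not> sybil_proof n a h k p w"
proof -
  have "is_instance 4 (\<lambda>_. 1) 0 (3/2)" by (simp add: is_instance_def)
  then show ?thesis using valid maxw lexopt nash notsyb by blast
qed

end
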